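(* For every admissible pair $(a,b)$ (as described in the context), the canonical cube category $\mathbb{C}_{(a,b)}$ is isomorphic to the monoidal subcategory $\mathcal{S}_{(a,b)}$ of $(\mathbf{Top},\times,1)$ generated by the interval $[0,1]$ with respect to the language $L_{(a,b)}$.
   Context: Structural rules: $\mathsf{w}$ (weakening), $\mathsf{e}$ (exchange), $\mathsf{c}$ (contraction). The admissible sets of structural rules $a$ are $\emptyset,\{\mathsf w\},\{\mathsf e\},\{\mathsf w,\mathsf e\},\{\mathsf e,\mathsf c\},\{\mathsf w,\mathsf e,\mathsf c\}$. The admissible signatures $b$ are $(0,1)$, $(0,1,\vee)$, $(0,1,\wedge)$, $(0,1,\vee,\wedge)$, $(0,1,{}')$, $(0,1,\vee,\wedge,{}')$, where $0,1$ are constants, $\vee,\wedge$ binary and ${}'$ unary. The language $L_{(a,b)}$ has terms built from variables and the function symbols of $b$. The canonical cube category $\mathbb{C}_{(a,b)}$ is the syntactic (strict monoidal) category of the theory of the structure $[0,1]$ (with $0,1$ the endpoints, $x\vee y=\max\{x,y\}$, $x\wedge y=\min\{x,y\}$, $x'=1-x$) in $L_{(a,b)}$: its objects are $[n]$, $n\ge 0$ (contexts of $n$ variables $x_1,\dots,x_n$), with $[m]\otimes[n]=[m+n]$; a morphism $[m]\to[n]$ is an $n$-tuple $(t_1,\dots,t_n)$ of terms in the context $x_1,\dots,x_m$ such that, listing all variable occurrences in $t_1,\dots,t_n$ from left to right, every variable occurs unless $\mathsf w\in a$, the variables occur in the order $x_1,\dots,x_m$ unless $\mathsf e\in a$, and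 no variable occurs twice unless $\mathsf c\in a$; two such tuples are identified when they define the same function $[0,1]^m\to[0,1]^n$; composition is substitution. The subcategory $\mathcal S_{(a,b)}$ of $\mathbf{Top}$ has objects $[0,1]^n$ and morphisms generated, under composition and cartesian product of maps, by identities, the operations of $b$ on $[0,1]$ (the points $0,1:1\to[0,1]$, $\max$, $\min$, $x\mapsto 1-x$ as applicable), and the structural maps allowed by $a$: the map $[0,1]\to 1$ if $\mathsf w\in a$, the swap $[0,1]^2\to[0,1]^2$ if $\mathsf e\in a$, the diagonal $[0,1]\to[0,1]^2$ if $\mathsf c\in a$. *)

theory Defs
  imports Main "HOL-Library.FuncSet" Complex_Main
begin

datatype srule = Wk | Ex | Ct

datatype opsym = OJoin | OMeet | ONeg   (* \<or>, \<and>, ' ; constants 0,1 are always present *)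

definition admissible_rules :: "srule set set" where
  "admissible_rules = {{}, {Wk}, {Ex}, {Wk, Ex}, {Ex, Ct}, {Wk, Ex, Ct}}"

definition admissible_sigs :: "opsym set set" where
  "admissible_sigs = {{}, {OJoin}, {OMeet}, {OJoin, OMeet}, {ONeg}, {OJoin, OMeet, ONeg}}"

section \<open>Terms of the language L_(a,b) (variables x_1..x_m are Var 0 .. Var (m-1))\<close>

datatype trm = Var nat | Zero | One | Join trm trm | Meet trm trm | Neg trm

fun in_sig :: "opsym set \<Rightarrow> trm \<Rightarrow> bool" where
  "in_sig b (Var i) = True"
| "in_sig b Zero = True"
| "in_sig b One = True"
| "in_sig b (Join s t) = (OJoin \<in> b \<and> in_sig b s \<and> in_sig b t)"
| "in_sig b (Meet s t) = (OMeet \<in> b \<and> in_sig b s \<and> in_sig b t)"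
| "in_sig b (Neg t) = (ONeg \<in> b \<and> in_sig b t)"

fun occs :: "trm \<Rightarrow> nat list" where
  "occs (Var i) = [i]"
| "occs Zero = []"
| "occs One = []"
| "occs (Join s t) = occs s @ occs t"
| "occs (Meet s t) = occs s @ occs t"
| "occs (Neg t) = occs t"

definition adm_tuple :: "srule set \<Rightarrow> opsym set \<Rightarrow> nat \<Rightarrow> trm list \<Rightarrow> bool" where
  "adm_tuple a b m ts \<longleftrightarrow>
     (\<forall>t\<in>set ts. in_sig b t) \<and>
     (let vs = concat (map occs ts) in
        set vs \<subseteq> {..<m} \<and>
        (Wk \<notin> a \<longrightarrow> {..<m} \<subseteq> set vs) \<and>
        (Ex \<notin> a \<longrightarrow> sorted vs) \<and>
        (Ct \<notin> a \<longrightarrow> distinct vs))"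

fun ev :: "trm \<Rightarrow> real list \<Rightarrow> real" where
  "ev (Var i) x = x ! i"
| "ev Zero x = 0"
| "ev One x = 1"
| "ev (Join s t) x = max (ev s x) (ev t x)"
| "ev (Meet s t) x = min (ev s x) (ev t x)"
| "ev (Neg t) x = 1 - ev t x"

definition cube :: "nat \<Rightarrow> real list set" where
  "cube n = {x. length x = n \<and> set x \<subseteq> {0..1}}"

text \<open>Maps [0,1]^m \<rightarrow> [0,1]^n are represented extensionally, restricted to the cube.\<close>
definition den :: "nat \<Rightarrow> trm list \<Rightarrow> (real list \<Rightarrow> real list)" where
  "den m ts = restrict (\<lambda>x. map (\<lambda>t. ev t x) ts) (cube m)"

text \<open>Morphisms [m] \<rightarrow> [n] of the canonical cube category C_(a,b): admissible n-tuples
  identified when they define the same function, i.e. the defined functions.\<close>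
definition C_hom :: "srule set \<Rightarrow> opsym set \<Rightarrow> nat \<Rightarrow> nat \<Rightarrow> (real list \<Rightarrow> real list) set" where
  "C_hom a b m n = {den m ts | ts. length ts = n \<and> adm_tuple a b m ts}"

text \<open>Composition in C_(a,b): substitution.  Tensor: juxtaposition with shifted variables.\<close>
fun subst :: "trm list \<Rightarrow> trm \<Rightarrow> trm" where
  "subst ts (Var i) = ts ! i"
| "subst ts Zero = Zero"
| "subst ts One = One"
| "subst ts (Join s t) = Join (subst ts s) (subst ts t)"
| "subst ts (Meet s t) = Meet (subst ts s) (subst ts t)"
| "subst ts (Neg t) = Neg (subst ts t)"

definition shift :: "nat \<Rightarrow> trm \<Rightarrow> trm" where
  "shift k t = subst (map Var [k..<k + Suc (Max (insert 0 (set (occs t))))]) t"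

definition tensor_tuple :: "nat \<Rightarrow> trm list \<Rightarrow> trm list \<Rightarrow> trm list" where
  "tensor_tuple m ts us = ts @ map (shift m) us"

definition prod_map :: "nat \<Rightarrow> nat \<Rightarrow> (real list \<Rightarrow> real list) \<Rightarrow> (real list \<Rightarrow> real list) \<Rightarrow> (real list \<Rightarrow> real list)" where
  "prod_map m p f g = restrict (\<lambda>x. f (take m x) @ g (drop m x)) (cube (m + p))"

inductive S_mor :: "srule set \<Rightarrow> opsym set \<Rightarrow> nat \<Rightarrow> nat \<Rightarrow> (real list \<Rightarrow> real list) \<Rightarrow> bool"
  for a :: "srule set" and b :: "opsym set" where
  s_id: "S_mor a b n n (restrict id (cube n))"
| s_zero: "S_mor a b 0 1 (restrict (\<lambda>x. [0]) (cube 0))"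
| s_one: "S_mor a b 0 1 (restrict (\<lambda>x. [1]) (cube 0))"
| s_join: "OJoin \<in> b \<Longrightarrow> S_mor a b 2 1 (restrict (\<lambda>x. [max (x!0) (x!1)]) (cube 2))"
| s_meet: "OMeet \<in> b \<Longrightarrow> S_mor a b 2 1 (restrict (\<lambda>x. [min (x!0) (x!1)]) (cube 2))"
| s_neg: "ONeg \<in> b \<Longrightarrow> S_mor a b 1 1 (restrict (\<lambda>x. [1 - x!0]) (cube 1))"
| s_weak: "Wk \<in> a \<Longrightarrow> S_mor a b 1 0 (restrict (\<lambda>x. []) (cube 1))"
| s_swap: "Ex \<in> a \<Longrightarrow> S_mor a b 2 2 (restrict (\<lambda>x. [x!1, x!0]) (cube 2))"
| s_diag: "Ct \<in> a \<Longrightarrow> S_mor a b 1 2 (restrict (\<lambda>x. [x!0, x!0]) (cube 1))"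
| s_comp: "S_mor a b m n f \<Longrightarrow> S_mor a b n k g \<Longrightarrow> S_mor a b m k (restrict (g \<circ> f) (cube m))"
| s_prod: "S_mor a b m n f \<Longrightarrow> S_mor a b p q g \<Longrightarrow> S_mor a b (m + p) (n + q) (prod_map m p f g)"

definition S_hom :: "srule set \<Rightarrow> opsym set \<Rightarrow> nat \<Rightarrow> nat \<Rightarrow> (real list \<Rightarrow> real list) set" where
  "S_hom a b m n = {f. S_mor a b m n f}"

end

theory Submission
  imports Defs "HOL-Combinatorics.Permutations"
begin


lemma ev_cong: "(\<forall>i\<in>set (occs t). x!i = y!i) \<Longrightarrow> ev t x = ev t y"
  by (induction t) auto

lemma ev_range: "set x \<subseteq> {0..1} \<Longrightarrow> set (occs t) \<subseteq> {..<length x} \<Longrightarrow> 0 \<le> ev t x \<and> ev t x \<le> 1"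
proof (induction t)
  case (Var i)
  then have "x!i \<in> set x" by auto
  then have "x!i \<in> {0..1}" using Var by blast
  then show ?case by auto
qed auto

lemma occs_subst: "occs (subst \<sigma> t) = concat (map (\<lambda>i. occs (\<sigma>!i)) (occs t))"
  by (induction t) auto

lemma ev_subst: "set (occs u) \<subseteq> {..<length \<sigma>} \<Longrightarrow> ev (subst \<sigma> u) y = ev u (map (\<lambda>t. ev t y) \<sigma>)"
  by (induction u) auto

lemma in_sig_subst: "(\<forall>i\<in>set (occs u). in_sig b (\<sigma>!i)) \<Longrightarrow> in_sig b u \<Longrightarrow> in_sig b (subst \<sigma> u)"
  by (induction u) auto

lemma den_in_cube: "x \<in> cube m \<Longrightarrow> (\<forall>t\<in>set ts. set (occs t) \<subseteq> {..<m}) \<Longrightarrow> den m ts x \<in> cube (length ts)"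
  using ev_range by (fastforce simp: den_def cube_def)

lemma adm_occs: "adm_tuple a b m ts \<Longrightarrow> \<forall>t\<in>set ts. set (occs t) \<subseteq> {..<m}"
  by (auto simp: adm_tuple_def Let_def)

lemma comp_den:
  assumes "length ts = n" "\<forall>t\<in>set ts. set (occs t) \<subseteq> {..<m}" "\<forall>u\<in>set us. set (occs u) \<subseteq> {..<n}"
  shows "den m (map (subst ts) us) = restrict (den n us \<circ> den m ts) (cube m)"
proof
  fix x
  show "den m (map (subst ts) us) x = restrict (den n us \<circ> den m ts) (cube m) x"
  proof (cases "x \<in> cube m")
    case True
    have "den m ts x \<in> cube n" using den_in_cube[OF True assms(2)] assms(1) by simp
    then show ?thesis using True assms by (auto simp: den_def ev_subst)
  qed (simp add: den_def)
qed

lemma occs_subst_var: "\<forall>i\<in>set (occs u). i < K \<Longrightarrow> occs (subst (map Var [k..<k + K]) u) = map ((+) k) (occs u)"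
  by (induction u) auto

lemma ev_subst_var: "\<forall>i\<in>set (occs u). i < K \<Longrightarrow> k \<le> length y \<Longrightarrow> ev (subst (map Var [k..<k + K]) u) y = ev u (drop k y)"
  by (induction u) auto

lemma in_sig_subst_var: "in_sig b u \<Longrightarrow> \<forall>i\<in>set (occs u). i < K \<Longrightarrow> in_sig b (subst (map Var [k..<k + K]) u)"
  by (induction u) auto

lemma shift_bound: "\<forall>i\<in>set (occs u). i < Suc (Max (insert 0 (set (occs u))))"
  by (simp add: less_Suc_eq_le)

lemma occs_shift: "occs (shift k u) = map ((+) k) (occs u)"
  unfolding shift_def using occs_subst_var[OF shift_bound] by blast

lemma ev_shift: "k \<le> length y \<Longrightarrow> ev (shift k u) y = ev u (drop k y)"
  unfolding shift_def using ev_subst_var[OF shift_bound] by blast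

lemma in_sig_shift: "in_sig b u \<Longrightarrow> in_sig b (shift k u)"
  unfolding shift_def using in_sig_subst_var[OF _ shift_bound] by blast


lemma tensor_den:
  assumes "\<forall>t\<in>set ts. set (occs t) \<subseteq> {..<m}"
  shows "den (m + p) (tensor_tuple m ts us) = prod_map m p (den m ts) (den p us)"
proof
  fix x
  show "den (m + p) (tensor_tuple m ts us) x = prod_map m p (den m ts) (den p us) x"
  proof (cases "x \<in> cube (m + p)")
    case True
    then have l: "length x = m + p" and s: "set x \<subseteq> {0..1}" by (auto simp: cube_def)
    have c1: "take m x \<in> cube m" using l s set_take_subset[of m x] by (auto simp: cube_def)
    have c2: "drop m x \<in> cube p" using l s set_drop_subset[of m x] by (auto simp: cube_def)
    have e1: "ev t x = ev t (take m x)" if "t \<in> set ts" for t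
    proof (intro ev_cong ballI)
      fix i assume "i \<in> set (occs t)"
      then have "i < m" using assms that by blast
      then show "x ! i = take m x ! i" by simp
    qed
    have e2: "ev (shift m u) x = ev u (drop m x)" for u
      using l by (intro ev_shift) simp
    show ?thesis using True c1 c2 e1 e2
      by (simp add: den_def prod_map_def tensor_tuple_def)
  qed (simp add: den_def prod_map_def)
qed

lemma id_den: "den n (map Var [0..<n]) = restrict id (cube n)"
proof
  fix x show "den n (map Var [0..<n]) x = restrict id (cube n) x"
    by (cases "x \<in> cube n") (auto simp: den_def cube_def intro: nth_equalityI)
qed

lemma sorted_concat_strict:
  "sorted_wrt (<) (V::nat list) \<Longrightarrow> sorted (concat (map B V)) \<longleftrightarrow>
    (\<forall>i\<in>set V. sorted (B i)) \<and> (\<forall>i\<in>set V. \<forall>j\<in>set V. i < j \<longrightarrow> (\<forall>x\<in>set (B i). \<forall>y\<in>set (B j). x \<le> y))"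
proof (induction V)
  case (Cons v V)
  have "sorted_wrt (<) V" using Cons.prems by simp
  note IH = Cons.IH[OF this]
  show ?case using Cons.prems unfolding IH by (auto simp: sorted_append IH)
qed simp

lemma distinct_concat_d:
  "distinct V \<Longrightarrow> distinct (concat (map B V)) \<longleftrightarrow>
    (\<forall>i\<in>set V. distinct (B i)) \<and> (\<forall>i\<in>set V. \<forall>j\<in>set V. i \<noteq> j \<longrightarrow> set (B i) \<inter> set (B j) = {})"
proof (induction V)
  case (Cons v V)
  have "distinct V" using Cons.prems by simp
  note IH = Cons.IH[OF this]
  show ?case using Cons.prems by (auto simp: distinct_append IH) blast
qed simp

lemma occs_comp: "concat (map occs (map (subst ts) us)) = concat (map (\<lambda>i. occs (ts!i)) (concat (map occs us)))"
  by (induction us) (auto simp: occs_subst)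

lemma occs_ts: "concat (map occs ts) = concat (map (\<lambda>i. occs (ts!i)) [0..<length ts])"
proof -
  have "map occs ts = map (\<lambda>i. occs (ts!i)) [0..<length ts]"
    by (intro nth_equalityI) auto
  then show ?thesis by simp
qed

lemma Ex_Ct: "a \<in> admissible_rules \<Longrightarrow> Ex \<notin> a \<Longrightarrow> Ct \<notin> a"
  by (auto simp: admissible_rules_def)

lemma Ct_Ex: "a \<in> admissible_rules \<Longrightarrow> Ct \<in> a \<Longrightarrow> Ex \<in> a"
  by (auto simp: admissible_rules_def)

lemma adm_comp:
  assumes a: "a \<in> admissible_rules" and n: "length ts = n"
    and ts: "adm_tuple a b m ts" and us: "adm_tuple a b n us"
  shows "adm_tuple a b m (map (subst ts) us)"
proof -
  define B where "B = (\<lambda>i. occs (ts!i))"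
  define V where "V = concat (map occs us)"
  define W where "W = concat (map occs ts)"
  have W: "W = concat (map B [0..<n])" unfolding W_def B_def using occs_ts n by simp
  have vs: "concat (map occs (map (subst ts) us)) = concat (map B V)"
    unfolding B_def V_def by (rule occs_comp)
  have Vn: "set V \<subseteq> {..<n}" using us unfolding adm_tuple_def Let_def V_def by simp
  have Wm: "set W \<subseteq> {..<m}" using ts unfolding adm_tuple_def Let_def W_def by simp
  have tsig: "\<forall>t\<in>set ts. in_sig b t" using ts unfolding adm_tuple_def by simp
  have usig: "\<forall>u\<in>set us. in_sig b u" using us unfolding adm_tuple_def by simp
  have Bsub: "set (B i) \<subseteq> set W" if "i < n" for i
    using that unfolding W by auto
  have sig: "\<forall>t\<in>set (map (subst ts) us). in_sig b t"
  proof
    fix t assume "t \<in> set (map (subst ts) us)"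
    then obtain u where u: "u \<in> set us" "t = subst ts u" by auto
    have "\<forall>i\<in>set (occs u). in_sig b (ts!i)"
    proof
      fix i assume "i \<in> set (occs u)"
      then have "i < n" using Vn u(1) unfolding V_def by auto
      then show "in_sig b (ts!i)" using tsig n by auto
    qed
    then show "in_sig b t" using u usig in_sig_subst by blast
  qed
  have s1: "set (concat (map B V)) \<subseteq> {..<m}"
    using Vn Bsub Wm by fastforce
  have s2: "{..<m} \<subseteq> set (concat (map B V))" if "Wk \<notin> a"
  proof -
    have "{..<n} \<subseteq> set V" using us that unfolding adm_tuple_def Let_def V_def by simp
    moreover have "{..<m} \<subseteq> set W" using ts that unfolding adm_tuple_def Let_def W_def by simp
    ultimately show ?thesis unfolding W by fastforce
  qed
  have s3: "sorted (concat (map B V))" if "Ex \<notin> a"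
  proof -
    have "Ct \<notin> a" using Ex_Ct a that by blast
    then have "sorted V" "distinct V" using us that unfolding adm_tuple_def Let_def V_def by auto
    then have sV: "sorted_wrt (<) V" by (simp add: strict_sorted_iff)
    have "sorted W" using ts that unfolding adm_tuple_def Let_def W_def by simp
    then have c: "(\<forall>i\<in>set [0..<n]. sorted (B i)) \<and> (\<forall>i\<in>set [0..<n]. \<forall>j\<in>set [0..<n]. i < j \<longrightarrow> (\<forall>x\<in>set (B i). \<forall>y\<in>set (B j). x \<le> y))"
      unfolding W using sorted_concat_strict[of "[0..<n]" B] by simp
    have h1: "sorted (B i)" if "i \<in> set V" for i using c Vn that by auto
    have h2: "x \<le> y" if "i \<in> set V" "j \<in> set V" "i < j" "x \<in> set (B i)" "y \<in> set (B j)" for i j x y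
    proof -
      have ij: "i \<in> {0..<n}" "j \<in> {0..<n}" using Vn that by auto
      have c2: "\<forall>i\<in>{0..<n}. \<forall>j\<in>{0..<n}. i < j \<longrightarrow> (\<forall>x\<in>set (B i). \<forall>y\<in>set (B j). x \<le> y)"
        using c by simp
      show ?thesis using bspec[OF bspec[OF c2 ij(1)] ij(2)] that by blast
    qed
    show ?thesis unfolding sorted_concat_strict[OF sV] using h1 h2 by blast
  qed
  have s4: "distinct (concat (map B V))" if "Ct \<notin> a"
  proof -
    have dV: "distinct V" using us that unfolding adm_tuple_def Let_def V_def by auto
    have "distinct W" using ts that unfolding adm_tuple_def Let_def W_def by simp
    then have c: "(\<forall>i\<in>set [0..<n]. distinct (B i)) \<and> (\<forall>i\<in>set [0..<n]. \<forall>j\<in>set [0..<n]. i \<noteq> j \<longrightarrow> set (B i) \<inter> set (B j) = {})"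
      unfolding W using distinct_concat_d[of "[0..<n]" B] by simp
    show ?thesis unfolding distinct_concat_d[OF dV] using c Vn by (simp add: subset_iff)
  qed
  show ?thesis unfolding adm_tuple_def Let_def vs using sig s1 s2 s3 s4 by blast
qed

lemma adm_tensor:
  assumes ts: "adm_tuple a b m ts" and us: "adm_tuple a b p us"
  shows "adm_tuple a b (m + p) (tensor_tuple m ts us)"
proof -
  define V where "V = concat (map occs us)"
  define W where "W = concat (map occs ts)"
  have vs: "concat (map occs (tensor_tuple m ts us)) = W @ map ((+) m) V"
    unfolding tensor_tuple_def V_def W_def by (simp add: occs_shift map_concat comp_def)
  have Vp: "set V \<subseteq> {..<p}" using us unfolding adm_tuple_def Let_def V_def by simp
  have Wm: "set W \<subseteq> {..<m}" using ts unfolding adm_tuple_def Let_def W_def by simp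
  have sig: "\<forall>t\<in>set (tensor_tuple m ts us). in_sig b t"
    using ts us in_sig_shift unfolding adm_tuple_def tensor_tuple_def by auto
  have s1: "set (W @ map ((+) m) V) \<subseteq> {..<m+p}" using Vp Wm by auto
  have s2: "{..<m+p} \<subseteq> set (W @ map ((+) m) V)" if "Wk \<notin> a"
  proof
    fix x assume x: "x \<in> {..<m+p}"
    have "{..<p} \<subseteq> set V" using us that unfolding adm_tuple_def Let_def V_def by simp
    moreover have "{..<m} \<subseteq> set W" using ts that unfolding adm_tuple_def Let_def W_def by simp
    ultimately show "x \<in> set (W @ map ((+) m) V)" using x
      by (cases "x < m") (auto simp: image_iff intro!: bexI[of _ "x - m"])
  qed
  have s3: "sorted (W @ map ((+) m) V)" if "Ex \<notin> a"
  proof -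
    have "sorted V" "sorted W" using us ts that unfolding adm_tuple_def Let_def V_def W_def by auto
    then show ?thesis using Vp Wm by (auto simp: sorted_append sorted_map less_imp_le_nat subset_iff)
  qed
  have s4: "distinct (W @ map ((+) m) V)" if "Ct \<notin> a"
  proof -
    have "distinct V" "distinct W" using us ts that unfolding adm_tuple_def Let_def V_def W_def by auto
    then show ?thesis using Wm by (auto simp: distinct_map inj_on_def)
  qed
  show ?thesis unfolding adm_tuple_def Let_def vs using sig s1 s2 s3 s4 by blast
qed

lemma CI: "f = den m ts \<Longrightarrow> length ts = n \<Longrightarrow> adm_tuple a b m ts \<Longrightarrow> f \<in> C_hom a b m n"
  unfolding C_hom_def by blast

lemma occs_vars: "concat (map occs (map Var xs)) = xs"
  by (induction xs) auto

lemma restrict_cong_cube: "(\<And>x. x \<in> A \<Longrightarrow> f x = g x) \<Longrightarrow> restrict f A = restrict g A"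
  by (auto simp: restrict_def)

lemma S_sub_C:
  assumes a: "a \<in> admissible_rules"
  shows "S_mor a b m n f \<Longrightarrow> f \<in> C_hom a b m n"
proof (induction rule: S_mor.induct)
  case (s_id n)
  have e: "concat (map occs (map Var [0..<n])) = [0..<n]" by (rule occs_vars)
  show ?case by (rule CI[OF id_den[symmetric]]) (auto simp: adm_tuple_def Let_def e simp del: map_map)
next
  case s_zero
  show ?case by (rule CI[of _ 0 "[Zero]"]) (auto simp: adm_tuple_def den_def)
next
  case s_one
  show ?case by (rule CI[of _ 0 "[One]"]) (auto simp: adm_tuple_def den_def)
next
  case s_join
  show ?case by (rule CI[of _ 2 "[Join (Var 0) (Var 1)]"]) (use s_join in \<open>auto simp: adm_tuple_def den_def\<close>)
next
  case s_meet
  show ?case by (rule CI[of _ 2 "[Meet (Var 0) (Var 1)]"]) (use s_meet in \<open>auto simp: adm_tuple_def den_def\<close>)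
next
  case s_neg
  show ?case by (rule CI[of _ 1 "[Neg (Var 0)]"]) (use s_neg in \<open>auto simp: adm_tuple_def den_def\<close>)
next
  case s_weak
  show ?case by (rule CI[of _ 1 "[]"]) (use s_weak in \<open>auto simp: adm_tuple_def den_def\<close>)
next
  case s_swap
  show ?case by (rule CI[of _ 2 "[Var 1, Var 0]"]) (use s_swap in \<open>auto simp: adm_tuple_def den_def\<close>)
next
  case s_diag
  show ?case by (rule CI[of _ 1 "[Var 0, Var 0]"]) (use s_diag in \<open>auto simp: adm_tuple_def den_def\<close>)
next
  case (s_comp m n f k g)
  from s_comp.IH(1) obtain ts where ts: "f = den m ts" "length ts = n" "adm_tuple a b m ts"
    unfolding C_hom_def by blast
  from s_comp.IH(2) obtain us where us: "g = den n us" "length us = k" "adm_tuple a b n us"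
    unfolding C_hom_def by blast
  show ?case
  proof (rule CI)
    show "restrict (g \<circ> f) (cube m) = den m (map (subst ts) us)"
      using comp_den[OF ts(2) adm_occs[OF ts(3)] adm_occs[OF us(3)]] ts us by simp
    show "adm_tuple a b m (map (subst ts) us)" by (rule adm_comp[OF a ts(2) ts(3) us(3)])
  qed (simp add: us)
next
  case (s_prod m n f p q g)
  from s_prod.IH(1) obtain ts where ts: "f = den m ts" "length ts = n" "adm_tuple a b m ts"
    unfolding C_hom_def by blast
  from s_prod.IH(2) obtain us where us: "g = den p us" "length us = q" "adm_tuple a b p us"
    unfolding C_hom_def by blast
  show ?case
  proof (rule CI)
    show "prod_map m p f g = den (m + p) (tensor_tuple m ts us)"
      using tensor_den[OF adm_occs[OF ts(3)]] ts us by simp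
    show "adm_tuple a b (m + p) (tensor_tuple m ts us)" by (rule adm_tensor[OF ts(3) us(3)])
  qed (simp add: ts us tensor_tuple_def)
qed

definition sel :: "nat \<Rightarrow> nat list \<Rightarrow> real list \<Rightarrow> real list" where
  "sel m vs = restrict (\<lambda>x. map (nth x) vs) (cube m)"

lemma den_vars: "den m (map Var vs) = sel m vs"
  by (simp add: den_def sel_def comp_def)

lemma S_eq: "S_mor a b m n f \<Longrightarrow> m = m' \<Longrightarrow> n = n' \<Longrightarrow> f = f' \<Longrightarrow> S_mor a b m' n' f'"
  by simp

definition IX :: "srule set \<Rightarrow> opsym set \<Rightarrow> nat \<Rightarrow> nat list \<Rightarrow> bool" where
  "IX a b m vs \<longleftrightarrow> S_mor a b m (length vs) (sel m vs)"

lemma IX_eq: "IX a b m vs \<Longrightarrow> m = m' \<Longrightarrow> vs = vs' \<Longrightarrow> IX a b m' vs'"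
  by simp

lemma sel_in_cube: "x \<in> cube m \<Longrightarrow> set vs \<subseteq> {..<m} \<Longrightarrow> sel m vs x \<in> cube (length vs)"
proof -
  assume x: "x \<in> cube m" and v: "set vs \<subseteq> {..<m}"
  have "x ! i \<in> {0..1}" if "i \<in> set vs" for i
  proof -
    have "i < length x" using x v that by (auto simp: cube_def)
    then have "x ! i \<in> set x" by (rule nth_mem)
    then show ?thesis using x by (auto simp: cube_def)
  qed
  then show ?thesis using x by (auto simp: sel_def cube_def)
qed

lemma sel_comp: "set vs \<subseteq> {..<m} \<Longrightarrow> set ws \<subseteq> {..<length vs} \<Longrightarrow>
  restrict (sel (length vs) ws \<circ> sel m vs) (cube m) = sel m (map (nth vs) ws)"
proof
  fix x assume v: "set vs \<subseteq> {..<m}" and w: "set ws \<subseteq> {..<length vs}"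
  show "restrict (sel (length vs) ws \<circ> sel m vs) (cube m) x = sel m (map (nth vs) ws) x"
  proof (cases "x \<in> cube m")
    case True
    have "sel m vs x \<in> cube (length vs)" using sel_in_cube[OF True v] .
    then show ?thesis using True w by (auto simp: sel_def)
  qed (simp add: sel_def)
qed

lemma sel_prod: "set vs \<subseteq> {..<m} \<Longrightarrow> set ws \<subseteq> {..<p} \<Longrightarrow>
  prod_map m p (sel m vs) (sel p ws) = sel (m + p) (vs @ map ((+) m) ws)"
proof
  fix x assume v: "set vs \<subseteq> {..<m}" and w: "set ws \<subseteq> {..<p}"
  show "prod_map m p (sel m vs) (sel p ws) x = sel (m + p) (vs @ map ((+) m) ws) x"
  proof (cases "x \<in> cube (m + p)")
    case True
    then have l: "length x = m + p" and s: "set x \<subseteq> {0..1}" by (auto simp: cube_def)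
    have c1: "take m x \<in> cube m" using l s set_take_subset[of m x] by (auto simp: cube_def)
    have c2: "drop m x \<in> cube p" using l s set_drop_subset[of m x] by (auto simp: cube_def)
    have e1: "map (nth (take m x)) vs = map (nth x) vs" using v by (auto simp: subset_iff)
    have e2: "map (nth (drop m x)) ws = map (nth x \<circ> (+) m) ws" using l by auto
    show ?thesis using True c1 c2 e1 e2 by (simp add: sel_def prod_map_def)
  qed (simp add: sel_def prod_map_def)
qed

lemma IX_id: "IX a b m [0..<m]"
proof -
  have "sel m [0..<m] = restrict id (cube m)" using id_den[of m] den_vars[of m "[0..<m]"] by simp
  then show ?thesis unfolding IX_def using S_mor.s_id[of a b m] by simp
qed

lemma IX_weak: "Wk \<in> a \<Longrightarrow> IX a b 1 []"
  unfolding IX_def using S_mor.s_weak[of a b] by (simp add: sel_def)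

lemma IX_swap: "Ex \<in> a \<Longrightarrow> IX a b 2 [1, 0]"
  unfolding IX_def by (rule S_eq[OF S_mor.s_swap]) (auto simp: sel_def)

lemma IX_diag: "Ct \<in> a \<Longrightarrow> IX a b 1 [0, 0]"
  unfolding IX_def by (rule S_eq[OF S_mor.s_diag]) (auto simp: sel_def)

lemma IX_comp: "IX a b m vs \<Longrightarrow> IX a b (length vs) ws \<Longrightarrow> set vs \<subseteq> {..<m} \<Longrightarrow> set ws \<subseteq> {..<length vs}
  \<Longrightarrow> IX a b m (map (nth vs) ws)"
proof -
  assume h: "IX a b m vs" "IX a b (length vs) ws" "set vs \<subseteq> {..<m}" "set ws \<subseteq> {..<length vs}"
  have "S_mor a b m (length ws) (restrict (sel (length vs) ws \<circ> sel m vs) (cube m))"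
    using h(1,2) unfolding IX_def by (rule S_mor.s_comp)
  then show ?thesis unfolding IX_def sel_comp[OF h(3,4)] by simp
qed

lemma IX_prod: "IX a b m vs \<Longrightarrow> IX a b p ws \<Longrightarrow> set vs \<subseteq> {..<m} \<Longrightarrow> set ws \<subseteq> {..<p}
  \<Longrightarrow> IX a b (m + p) (vs @ map ((+) m) ws)"
proof -
  assume h: "IX a b m vs" "IX a b p ws" "set vs \<subseteq> {..<m}" "set ws \<subseteq> {..<p}"
  have "S_mor a b (m + p) (length vs + length ws) (prod_map m p (sel m vs) (sel p ws))"
    using h(1,2) unfolding IX_def by (rule S_mor.s_prod)
  then show ?thesis unfolding IX_def sel_prod[OF h(3,4)] by simp
qed

lemma IX_nil: "Wk \<in> a \<Longrightarrow> IX a b k []"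
proof (induction k)
  case 0
  show ?case using IX_id[of a b 0] by simp
next
  case (Suc k)
  show ?case using IX_prod[OF IX_weak[OF Suc.prems] Suc.IH[OF Suc.prems]] by simp
qed

lemma IX_proj: "Wk \<in> a \<Longrightarrow> sorted_wrt (<) vs \<Longrightarrow> set vs \<subseteq> {..<m} \<Longrightarrow> IX a b m vs"
proof (induction vs arbitrary: m rule: rev_induct)
  case Nil
  then show ?case using IX_nil by blast
next
  case (snoc j vs)
  have lt: "\<forall>i\<in>set vs. i < j" using snoc.prems(2) by (simp add: sorted_wrt_append)
  have jm: "j < m" using snoc.prems(3) by simp
  have IH: "IX a b j vs" using snoc.IH[OF snoc.prems(1)] snoc.prems(2) lt
    by (auto simp: sorted_wrt_append subset_iff)
  have c: "IX a b (1 + (m - j - 1)) ([0] @ map ((+) 1) [])"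
    using IX_prod[OF IX_id[of a b 1] IX_nil[OF snoc.prems(1), where k="m - j - 1"]] by simp
  have "IX a b (j + (1 + (m - j - 1))) (vs @ map ((+) j) ([0] @ map ((+) 1) []))"
    using IX_prod[OF IH c] lt by auto
  then show ?case by (rule IX_eq) (use jm in auto)
qed

lemma map_nth_take: "p \<le> length xs \<Longrightarrow> map (nth xs) [0..<p] = take p xs"
  by (intro nth_equalityI) auto

lemma map_nth_drop: "map (nth xs) [p..<length xs] = drop p xs"
  by (intro nth_equalityI) auto

lemma map_nth_append: "\<forall>i\<in>set is. i < length xs \<Longrightarrow> map (nth (xs @ ys)) is = map (nth xs) is"
  by (auto simp: nth_append)

lemma map_plus_upt: "map ((+) p) [0..<k] = [p..<p + k]"
  by (intro nth_equalityI) auto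

lemma IX_one: "IX a b 1 [0]"
  using IX_id[of a b 1] by simp

lemma IX_rot: "Ex \<in> a \<Longrightarrow> IX a b (Suc k) (k # [0..<k])"
proof (induction k)
  case 0
  show ?case using IX_id[of a b 1] by simp
next
  case (Suc k)
  define s where "s = [0..<k] @ [k+1, k]"
  have s0: "IX a b (k + 2) ([0..<k] @ map ((+) k) [1, 0])"
    by (rule IX_prod[OF IX_id[of a b k] IX_swap[OF Suc.prems]]) auto
  have s: "IX a b (k + 2) s" using s0 unfolding s_def by simp
  have r0: "IX a b (Suc k + 1) ((k # [0..<k]) @ map ((+) (Suc k)) [0])"
    by (rule IX_prod[OF Suc.IH[OF Suc.prems] IX_one]) auto
  have ls: "length s = Suc k + 1" by (simp add: s_def)
  have r: "IX a b (length s) ((k # [0..<k]) @ map ((+) (Suc k)) [0])" using r0 ls by simp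
  have c: "IX a b (k + 2) (map (nth s) ((k # [0..<k]) @ map ((+) (Suc k)) [0]))"
    by (rule IX_comp[OF s r]) (auto simp: s_def)
  moreover have "map (nth s) ((k # [0..<k]) @ map ((+) (Suc k)) [0]) = Suc k # [0..<Suc k]"
  proof -
    have "map (nth ([0..<k] @ [Suc k, k])) [0..<k] = [0..<k]"
      by (subst map_nth_append) (auto simp: map_nth_take)
    then show ?thesis unfolding s_def by (simp add: nth_append)
  qed
  ultimately show ?case by simp
qed

lemma IX_ins: "Ex \<in> a \<Longrightarrow> p \<le> n \<Longrightarrow> IX a b (Suc n) ([0..<p] @ n # [p..<n])"
proof -
  assume e: "Ex \<in> a" and pn: "p \<le> n"
  have "IX a b (p + Suc (n - p)) ([0..<p] @ map ((+) p) ((n - p) # [0..<n - p]))"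
    by (rule IX_prod[OF IX_id[of a b p] IX_rot[OF e, where k="n - p"]]) auto
  then show ?thesis by (rule IX_eq) (use pn in \<open>auto simp: map_plus_upt\<close>)
qed


lemma IX_perm_aux: "Ex \<in> a \<Longrightarrow> length \<sigma> = L \<Longrightarrow> distinct \<sigma> \<Longrightarrow> set \<sigma> = {..<L} \<Longrightarrow> IX a b L \<sigma>"
proof (induction L arbitrary: \<sigma>)
  case 0
  then show ?case using IX_id[of a b 0] by simp
next
  case (Suc n)
  have "n \<in> set \<sigma>" using Suc.prems by auto
  then obtain us ws where sp: "\<sigma> = us @ n # ws" using split_list by metis
  have d: "distinct (us @ ws)" and nn: "n \<notin> set (us @ ws)" using Suc.prems(3) sp by auto
  have st: "set (us @ ws) = {..<n}"
  proof -
    have "set (us @ ws) = set \<sigma> - {n}" using sp nn by auto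
    also have "\<dots> = {..<Suc n} - {n}" using Suc.prems(4) by simp
    also have "\<dots> = {..<n}" by auto
    finally show ?thesis .
  qed
  have ln: "length (us @ ws) = n" using Suc.prems(2) sp by simp
  have IH: "IX a b n (us @ ws)" using Suc.IH[OF Suc.prems(1) ln d st] .
  have A: "IX a b (n + 1) ((us @ ws) @ map ((+) n) [0])"
    by (rule IX_prod[OF IH IX_one]) (use st in auto)
  have pn: "length us \<le> n" using ln by simp
  have I: "IX a b (length ((us @ ws) @ map ((+) n) [0])) ([0..<length us] @ n # [length us..<n])"
    using IX_ins[OF Suc.prems(1) pn] ln by simp
  have sA: "set ((us @ ws) @ map ((+) n) [0]) \<subseteq> {..<n + 1}" using st by auto
  have sI: "set ([0..<length us] @ n # [length us..<n]) \<subseteq> {..<length ((us @ ws) @ map ((+) n) [0])}"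
    using ln by auto
  have "IX a b (n + 1) (map (nth ((us @ ws) @ map ((+) n) [0])) ([0..<length us] @ n # [length us..<n]))"
    by (rule IX_comp[OF A I sA sI])
  moreover have "map (nth ((us @ ws) @ [n])) ([0..<length us] @ n # [length us..<n]) = \<sigma>"
  proof -
    have 1: "map (nth ((us @ ws) @ [n])) [0..<length us] = us"
    proof -
      have "map (nth ((us @ ws) @ [n])) [0..<length us] = map (nth (us @ ws)) [0..<length us]"
        by (rule map_nth_append) auto
      also have "\<dots> = take (length us) (us @ ws)" by (rule map_nth_take) simp
      finally show ?thesis by simp
    qed
    have 2: "map (nth ((us @ ws) @ [n])) [length us..<n] = ws"
    proof -
      have "map (nth ((us @ ws) @ [n])) [length us..<n] = map (nth (us @ ws)) [length us..<length (us @ ws)]"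
        using ln by (subst map_nth_append) auto
      also have "\<dots> = drop (length us) (us @ ws)" by (rule map_nth_drop)
      finally show ?thesis by simp
    qed
    have 3: "((us @ ws) @ [n]) ! n = n" using ln by (metis nth_append_length)
    show ?thesis using 1 2 3 sp by simp
  qed
  ultimately show ?case by simp
qed

lemma IX_mset: "Ex \<in> a \<Longrightarrow> IX a b m us \<Longrightarrow> set us \<subseteq> {..<m} \<Longrightarrow> mset vs = mset us \<Longrightarrow> IX a b m vs"
proof -
  assume e: "Ex \<in> a" and u: "IX a b m us" "set us \<subseteq> {..<m}" and ms: "mset vs = mset us"
  obtain f where f: "f permutes {..<length us}" "permute_list f us = vs"
    using mset_eq_permutation[OF ms] by blast
  define \<sigma> where "\<sigma> = map f [0..<length us]"
  have "distinct \<sigma>" unfolding \<sigma>_def using permutes_inj_on[OF f(1)]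
    by (simp add: distinct_map atLeast0LessThan)
  moreover have sg: "set \<sigma> = {..<length us}" unfolding \<sigma>_def using permutes_image[OF f(1)]
    by (simp add: atLeast0LessThan)
  moreover have "length \<sigma> = length us" by (simp add: \<sigma>_def)
  ultimately have "IX a b (length us) \<sigma>" using IX_perm_aux[OF e] by blast
  then have "IX a b m (map (nth us) \<sigma>)"
    by (rule IX_comp[OF u(1) _ u(2)]) (simp add: sg)
  moreover have "map (nth us) \<sigma> = vs" using f(2) unfolding \<sigma>_def permute_list_def by (simp add: comp_def)
  ultimately show ?thesis by simp
qed

lemma IX_copy: "Ct \<in> a \<Longrightarrow> Ex \<in> a \<Longrightarrow> j < m \<Longrightarrow> IX a b m ([0..<m] @ [j])"
proof -
  assume c: "Ct \<in> a" and e: "Ex \<in> a" and jm: "j < m"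
  have D1: "IX a b (j + 1) ([0..<j] @ map ((+) j) [0, 0])"
    by (rule IX_prod[OF IX_id[of a b j] IX_diag[OF c]]) auto
  have D2: "IX a b ((j + 1) + (m - j - 1)) (([0..<j] @ map ((+) j) [0, 0]) @ map ((+) (j + 1)) [0..<m - j - 1])"
    by (rule IX_prod[OF D1 IX_id[of a b "m - j - 1"]]) auto
  define D where "D = [0..<j] @ [j, j] @ [Suc j..<m]"
  have DD: "([0..<j] @ map ((+) j) [0, 0]) @ map ((+) (j + 1)) [0..<m - j - 1] = D"
    unfolding D_def using jm by (simp add: map_plus_upt)
  have D: "IX a b m D" using D2 jm unfolding DD by simp
  have sD: "set D \<subseteq> {..<m}" using jm unfolding D_def by auto
  have um: "[0..<m] = [0..<j] @ j # [Suc j..<m]" using jm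
    by (metis upt_conv_Cons upt_add_eq_append le0 le_add_diff_inverse less_imp_le_nat)
  have "mset ([0..<m] @ [j]) = mset D" unfolding um D_def by simp
  then show ?thesis using IX_mset[OF e D sD] by blast
qed

lemma IX_dup: "Ct \<in> a \<Longrightarrow> Ex \<in> a \<Longrightarrow> set ws \<subseteq> {..<m} \<Longrightarrow> IX a b m ([0..<m] @ ws)"
proof (induction ws rule: rev_induct)
  case Nil
  then show ?case using IX_id[of a b m] by simp
next
  case (snoc j ws)
  have jm: "j < m" using snoc.prems by simp
  have IH: "IX a b m ([0..<m] @ ws)" using snoc by simp
  have A: "IX a b (m + 1) (([0..<m] @ ws) @ map ((+) m) [0])"
    by (rule IX_prod[OF IH IX_one]) (use snoc.prems in auto)
  have C: "IX a b m ([0..<m] @ [j])" by (rule IX_copy[OF snoc.prems(1,2) jm])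
  have A': "IX a b (length ([0..<m] @ [j])) (([0..<m] @ ws) @ map ((+) m) [0])" using A by simp
  have "IX a b m (map (nth ([0..<m] @ [j])) (([0..<m] @ ws) @ map ((+) m) [0]))"
    by (rule IX_comp[OF C A']) (use jm snoc.prems in auto)
  moreover have "map (nth ([0..<m] @ [j])) (([0..<m] @ ws) @ map ((+) m) [0]) = [0..<m] @ ws @ [j]"
  proof -
    have "map (nth ([0..<m] @ [j])) ([0..<m] @ ws) = map (nth [0..<m]) ([0..<m] @ ws)"
      by (rule map_nth_append) (use snoc.prems in auto)
    also have "\<dots> = [0..<m] @ ws" using snoc.prems by (auto intro!: map_idI)
    finally have 1: "map (nth ([0..<m] @ [j])) ([0..<m] @ ws) = [0..<m] @ ws" .
    have 2: "([0..<m] @ [j]) ! m = j" by (metis length_upt minus_nat.diff_0 nth_append_length)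
    show ?thesis using 1 2 by simp
  qed
  ultimately show ?case by simp
qed

lemma IX_struct:
  assumes a: "a \<in> admissible_rules" and s1: "set vs \<subseteq> {..<m}"
    and s2: "Wk \<notin> a \<longrightarrow> {..<m} \<subseteq> set vs" and s3: "Ex \<notin> a \<longrightarrow> sorted vs"
    and s4: "Ct \<notin> a \<longrightarrow> distinct vs"
  shows "IX a b m vs"
proof (cases "Ct \<in> a")
  case c: True
  have e: "Ex \<in> a" using Ct_Ex[OF a c] .
  show ?thesis
  proof (cases "Wk \<in> a")
    case w: True
    have A: "IX a b m ([0..<m] @ vs)" by (rule IX_dup[OF c e s1])
    have P: "IX a b (length ([0..<m] @ vs)) [m..<m + length vs]"
      by (rule IX_proj[OF w]) auto
    have "IX a b m (map (nth ([0..<m] @ vs)) [m..<m + length vs])"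
      by (rule IX_comp[OF A P]) (use s1 in auto)
    moreover have "map (nth ([0..<m] @ vs)) [m..<m + length vs] = vs"
      using map_nth_drop[of "[0..<m] @ vs" m] by simp
    ultimately show ?thesis by simp
  next
    case w: False
    have cov: "{..<m} \<subseteq> set vs" using s2 w by simp
    have sub: "mset [0..<m] \<subseteq># mset vs"
    proof (rule mset_subset_eqI)
      fix x
      show "count (mset [0..<m]) x \<le> count (mset vs) x"
      proof (cases "x < m")
        case True
        then have "x \<in># mset vs" using cov by auto
        then have "0 < count (mset vs) x" by simp
        moreover have "count (mset [0..<m]) x = 1" using True by (simp add: count_mset_0_iff distinct_count_atmost_1)
        ultimately show ?thesis by simp
      next
        case False
        then have "count (mset [0..<m]) x = 0" by (simp add: count_mset_0_iff)
        then show ?thesis by simp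
      qed
    qed
    obtain ws where ws: "mset ws = mset vs - mset [0..<m]" using ex_mset by blast
    have msv: "mset vs = mset ([0..<m] @ ws)" using sub ws by (simp add: subset_mset.add_diff_inverse)
    have "set ws \<subseteq> set vs"
    proof
      fix x assume "x \<in> set ws"
      then have "x \<in># mset vs - mset [0..<m]" using ws by (metis set_mset_mset)
      then show "x \<in> set vs" by (auto dest: in_diffD)
    qed
    then have sw: "set ws \<subseteq> {..<m}" using s1 by blast
    show ?thesis
      by (rule IX_mset[OF e IX_dup[OF c e sw] _ msv]) (use sw in auto)
  qed
next
  case c: False
  have d: "distinct vs" using s4 c by simp
  show ?thesis
  proof (cases "Ex \<in> a")
    case e: True
    show ?thesis
    proof (cases "Wk \<in> a")
      case w: True
      define sv where "sv = sorted_list_of_set (set vs)"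
      have ssv: "set sv = set vs" "sorted_wrt (<) sv" unfolding sv_def by auto
      have "IX a b m sv" by (rule IX_proj[OF w ssv(2)]) (use s1 ssv in auto)
      moreover have "mset vs = mset sv" using d ssv
        by (metis distinct_sorted_list_of_set set_eq_iff_mset_eq_distinct sv_def)
      ultimately show ?thesis using IX_mset[OF e] s1 ssv by blast
    next
      case w: False
      have "set vs = {..<m}" using s1 s2 w by blast
      then have "mset vs = mset [0..<m]" using d
        by (metis atLeast0LessThan distinct_upt set_eq_iff_mset_eq_distinct set_upt)
      then show ?thesis by (intro IX_mset[OF e IX_id]) (auto simp: atLeast0LessThan)
    qed
  next
    case e: False
    have so: "sorted vs" using s3 e by simp
    show ?thesis
    proof (cases "Wk \<in> a")
      case w: True
      show ?thesis by (rule IX_proj[OF w]) (use so d s1 in \<open>auto simp: strict_sorted_iff\<close>)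
    next
      case w: False
      have "set vs = {..<m}" using s1 s2 w by blast
      then have "vs = [0..<m]"
        by (intro sorted_distinct_set_unique) (use so d in \<open>auto simp: atLeast0LessThan\<close>)
      then show ?thesis using IX_id by simp
    qed
  qed
qed

fun lin :: "nat \<Rightarrow> trm \<Rightarrow> trm" where
  "lin k (Var i) = Var k"
| "lin k Zero = Zero"
| "lin k One = One"
| "lin k (Join s t) = Join (lin k s) (lin (k + length (occs s)) t)"
| "lin k (Meet s t) = Meet (lin k s) (lin (k + length (occs s)) t)"
| "lin k (Neg t) = Neg (lin k t)"

fun linl :: "nat \<Rightarrow> trm list \<Rightarrow> trm list" where
  "linl k [] = []"
| "linl k (t # ts) = lin k t # linl (k + length (occs t)) ts"

lemma upt_app: "[k..<k + p] @ [k + p..<k + p + q] = [k..<k + (p + q)]"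
  by (metis add.assoc le_add1 upt_add_eq_append)

lemma occs_lin: "occs (lin k t) = [k..<k + length (occs t)]"
  by (induction t arbitrary: k) (simp_all add: upt_app)

lemma in_sig_lin: "in_sig b (lin k t) = in_sig b t"
  by (induction t arbitrary: k) auto

lemma occs_linl: "concat (map occs (linl k ts)) = [k..<k + length (concat (map occs ts))]"
  by (induction ts arbitrary: k) (simp_all add: occs_lin upt_app)

lemma length_linl: "length (linl k ts) = length ts"
  by (induction ts arbitrary: k) auto

lemma map_upt_split: "map g [k..<k + (p + q)] = map g [k..<k + p] @ map g [k + p..<k + p + q]"
  by (simp add: upt_app[symmetric] add.assoc)

lemma ev_lin_sem: "map (nth y) [k..<k + length (occs t)] = map (nth x) (occs t) \<Longrightarrow> ev (lin k t) y = ev t x"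
proof (induction t arbitrary: k)
  case (Join s t)
  from Join.prems have "map (nth y) [k..<k + length (occs s)] @ map (nth y) [k + length (occs s)..<k + length (occs s) + length (occs t)]
     = map (nth x) (occs s) @ map (nth x) (occs t)" by (simp add: map_upt_split)
  then have "map (nth y) [k..<k + length (occs s)] = map (nth x) (occs s)"
     "map (nth y) [k + length (occs s)..<k + length (occs s) + length (occs t)] = map (nth x) (occs t)"
    by (simp_all add: append_eq_append_conv)
  then show ?case using Join.IH by simp
next
  case (Meet s t)
  from Meet.prems have "map (nth y) [k..<k + length (occs s)] @ map (nth y) [k + length (occs s)..<k + length (occs s) + length (occs t)]
     = map (nth x) (occs s) @ map (nth x) (occs t)" by (simp add: map_upt_split)
  then have "map (nth y) [k..<k + length (occs s)] = map (nth x) (occs s)"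
     "map (nth y) [k + length (occs s)..<k + length (occs s) + length (occs t)] = map (nth x) (occs t)"
    by (simp_all add: append_eq_append_conv)
  then show ?case using Meet.IH by simp
qed auto

lemma ev_linl_sem: "map (nth y) [k..<k + length (concat (map occs ts))] = map (nth x) (concat (map occs ts)) \<Longrightarrow>
  map (\<lambda>u. ev u y) (linl k ts) = map (\<lambda>t. ev t x) ts"
proof (induction ts arbitrary: k)
  case (Cons t ts)
  from Cons.prems have "map (nth y) [k..<k + length (occs t)] @ map (nth y) [k + length (occs t)..<k + length (occs t) + length (concat (map occs ts))]
     = map (nth x) (occs t) @ map (nth x) (concat (map occs ts))" by (simp add: map_upt_split)
  then have "map (nth y) [k..<k + length (occs t)] = map (nth x) (occs t)"
     "map (nth y) [k + length (occs t)..<k + length (occs t) + length (concat (map occs ts))] = map (nth x) (concat (map occs ts))"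
    by (simp_all add: append_eq_append_conv)
  then show ?case using Cons.IH ev_lin_sem by simp
qed simp

lemma ev_lin_shift: "k + length (occs t) \<le> length y \<Longrightarrow> ev (lin k t) y = ev (lin 0 t) (drop k y)"
proof (induction t arbitrary: k y)
  case (Join s t)
  let ?ls = "length (occs s)"
  have 1: "ev (lin k s) y = ev (lin 0 s) (drop k y)" using Join.prems by (intro Join.IH(1)) simp
  have 2: "ev (lin (k + ?ls) t) y = ev (lin 0 t) (drop (k + ?ls) y)" using Join.prems by (intro Join.IH(2)) simp
  have 3: "ev (lin ?ls t) (drop k y) = ev (lin 0 t) (drop ?ls (drop k y))" using Join.prems by (intro Join.IH(2)) simp
  show ?case using 1 2 3 by (simp add: add.commute)
next
  case (Meet s t)
  let ?ls = "length (occs s)"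
  have 1: "ev (lin k s) y = ev (lin 0 s) (drop k y)" using Meet.prems by (intro Meet.IH(1)) simp
  have 2: "ev (lin (k + ?ls) t) y = ev (lin 0 t) (drop (k + ?ls) y)" using Meet.prems by (intro Meet.IH(2)) simp
  have 3: "ev (lin ?ls t) (drop k y) = ev (lin 0 t) (drop ?ls (drop k y))" using Meet.prems by (intro Meet.IH(2)) simp
  show ?case using 1 2 3 by (simp add: add.commute)
next
  case (Var i)
  then show ?case by simp
next
  case (Neg t)
  have "ev (lin k t) y = ev (lin 0 t) (drop k y)" using Neg.prems by (intro Neg.IH) simp
  then show ?case by simp
qed simp_all

lemma linl_shift: "k + length (concat (map occs ts)) \<le> length y \<Longrightarrow>
  map (\<lambda>u. ev u y) (linl k ts) = map (\<lambda>u. ev u (drop k y)) (linl 0 ts)"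
proof (induction ts arbitrary: k y)
  case (Cons t ts)
  have 1: "ev (lin k t) y = ev (lin 0 t) (drop k y)" using Cons.prems by (intro ev_lin_shift) simp
  have 2: "map (\<lambda>u. ev u y) (linl (k + length (occs t)) ts) = map (\<lambda>u. ev u (drop (k + length (occs t)) y)) (linl 0 ts)"
    using Cons.prems by (intro Cons.IH) simp
  have 3: "map (\<lambda>u. ev u (drop k y)) (linl (length (occs t)) ts) = map (\<lambda>u. ev u (drop (length (occs t)) (drop k y))) (linl 0 ts)"
    using Cons.prems by (intro Cons.IH) simp
  show ?case using 1 2 3 by (simp add: add.commute)
qed simp

lemma den_eqI: "(\<And>x. x \<in> cube m \<Longrightarrow> map (\<lambda>t. ev t x) ts = map (\<lambda>t. ev t x) us) \<Longrightarrow> den m ts = den m us"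
  unfolding den_def by (rule restrict_cong_cube)

lemma occs_lin0_sub: "set (occs (lin 0 t)) \<subseteq> {..<length (occs t)}"
  by (auto simp: occs_lin)

lemma S_bin:
  assumes J: "S_mor a b 2 1 (den 2 [op (Var 0) (Var 1)])"
    and oc: "occs (op (Var 0) (Var 1)) = [0, 1]"
    and sub: "\<And>s t. subst [s, t] (op (Var 0) (Var 1)) = op s t"
    and evop: "\<And>s t x. ev (op s t) x = f (ev s x) (ev t x)"
    and S1: "S_mor a b ls 1 (den ls [u])" and S2: "S_mor a b lt 1 (den lt [v])"
    and o1: "set (occs u) \<subseteq> {..<ls}" and o2: "set (occs v) \<subseteq> {..<lt}"
    and ev2: "\<And>x. x \<in> cube (ls + lt) \<Longrightarrow> ev v' x = ev v (drop ls x)"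
  shows "S_mor a b (ls + lt) 1 (den (ls + lt) [op u v'])"
proof -
  have P0: "S_mor a b (ls + lt) (1 + 1) (prod_map ls lt (den ls [u]) (den lt [v]))"
    by (rule S_mor.s_prod[OF S1 S2])
  define tt where "tt = tensor_tuple ls [u] [v]"
  have tt: "tt = [u, shift ls v]" by (simp add: tt_def tensor_tuple_def)
  have P: "S_mor a b (ls + lt) 2 (den (ls + lt) tt)"
    using P0 tensor_den[of "[u]" ls lt "[v]"] o1 unfolding tt_def by (simp add: numeral_2_eq_2)
  have otts: "\<forall>t\<in>set tt. set (occs t) \<subseteq> {..<ls + lt}"
    using o1 o2 by (auto simp: tt occs_shift)
  have C: "S_mor a b (ls + lt) 1 (restrict (den 2 [op (Var 0) (Var 1)] \<circ> den (ls + lt) tt) (cube (ls + lt)))"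
    by (rule S_mor.s_comp[OF P J])
  have "restrict (den 2 [op (Var 0) (Var 1)] \<circ> den (ls + lt) tt) (cube (ls + lt))
       = den (ls + lt) (map (subst tt) [op (Var 0) (Var 1)])"
  proof (rule comp_den[symmetric])
    show "length tt = 2" by (simp add: tt)
    show "\<forall>t\<in>set tt. set (occs t) \<subseteq> {..<ls + lt}" by (rule otts)
    have "set (occs (op (Var 0) (Var 1))) \<subseteq> {..<2}" unfolding oc by auto
    then show "\<forall>u\<in>set [op (Var 0) (Var 1)]. set (occs u) \<subseteq> {..<2}"
      by simp
  qed
  also have "\<dots> = den (ls + lt) [op u (shift ls v)]" unfolding tt using sub[of u "shift ls v"] by simp
  also have "\<dots> = den (ls + lt) [op u v']"
  proof (rule den_eqI)
    fix x assume x: "x \<in> cube (ls + lt)"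
    have "ev (shift ls v) x = ev v (drop ls x)" using x by (intro ev_shift) (simp add: cube_def)
    then show "map (\<lambda>t. ev t x) [op u (shift ls v)] = map (\<lambda>t. ev t x) [op u v']"
      using ev2[OF x] by (simp add: evop)
  qed
  finally show ?thesis using C by simp
qed

lemma S_join: "OJoin \<in> b \<Longrightarrow> S_mor a b 2 1 (den 2 [Join (Var 0) (Var 1)])"
  using S_mor.s_join[of b a] by (simp add: den_def)

lemma S_meet: "OMeet \<in> b \<Longrightarrow> S_mor a b 2 1 (den 2 [Meet (Var 0) (Var 1)])"
  using S_mor.s_meet[of b a] by (simp add: den_def)

lemma S_lin_term: "in_sig b t \<Longrightarrow> S_mor a b (length (occs t)) 1 (den (length (occs t)) [lin 0 t])"
proof (induction t)
  case (Var i)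
  have e: "den 1 [Var 0] = restrict id (cube 1)" using id_den[of 1] by simp
  have "S_mor a b 1 1 (den 1 [Var 0])" unfolding e by (rule S_mor.s_id)
  then show ?case by simp
next
  case Zero
  show ?case using S_mor.s_zero[of a b] by (simp add: den_def restrict_def)
next
  case One
  show ?case using S_mor.s_one[of a b] by (simp add: den_def restrict_def)
next
  case (Join s t)
  have "S_mor a b (length (occs s) + length (occs t)) 1 (den (length (occs s) + length (occs t)) [Join (lin 0 s) (lin (length (occs s)) t)])"
  proof (rule S_bin[where f=max and op=Join and u="lin 0 s" and v="lin 0 t"])
    show "S_mor a b 2 1 (den 2 [Join (Var 0) (Var 1)])" using Join.prems S_join by simp
    show "S_mor a b (length (occs s)) 1 (den (length (occs s)) [lin 0 s])" using Join by simp
    show "S_mor a b (length (occs t)) 1 (den (length (occs t)) [lin 0 t])" using Join by simp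
    fix x assume "x \<in> cube (length (occs s) + length (occs t))"
    then show "ev (lin (length (occs s)) t) x = ev (lin 0 t) (drop (length (occs s)) x)"
      by (intro ev_lin_shift) (simp add: cube_def)
  qed (auto simp: occs_lin)
  then show ?case by simp
next
  case (Meet s t)
  have "S_mor a b (length (occs s) + length (occs t)) 1 (den (length (occs s) + length (occs t)) [Meet (lin 0 s) (lin (length (occs s)) t)])"
  proof (rule S_bin[where f=min and op=Meet and u="lin 0 s" and v="lin 0 t"])
    show "S_mor a b 2 1 (den 2 [Meet (Var 0) (Var 1)])" using Meet.prems S_meet by simp
    show "S_mor a b (length (occs s)) 1 (den (length (occs s)) [lin 0 s])" using Meet by simp
    show "S_mor a b (length (occs t)) 1 (den (length (occs t)) [lin 0 t])" using Meet by simp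
    fix x assume "x \<in> cube (length (occs s) + length (occs t))"
    then show "ev (lin (length (occs s)) t) x = ev (lin 0 t) (drop (length (occs s)) x)"
      by (intro ev_lin_shift) (simp add: cube_def)
  qed (auto simp: occs_lin)
  then show ?case by simp
next
  case (Neg t)
  let ?l = "length (occs t)"
  have N: "S_mor a b 1 1 (den 1 [Neg (Var 0)])" using S_mor.s_neg[of b a] Neg.prems by (simp add: den_def)
  have T: "S_mor a b ?l 1 (den ?l [lin 0 t])" using Neg by simp
  have "S_mor a b ?l 1 (restrict (den 1 [Neg (Var 0)] \<circ> den ?l [lin 0 t]) (cube ?l))"
    by (rule S_mor.s_comp[OF T N])
  moreover have "restrict (den 1 [Neg (Var 0)] \<circ> den ?l [lin 0 t]) (cube ?l) = den ?l (map (subst [lin 0 t]) [Neg (Var 0)])"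
    by (rule comp_den[symmetric]) (auto simp: occs_lin)
  ultimately show ?case by simp
qed

lemma S_linl: "\<forall>t\<in>set ts. in_sig b t \<Longrightarrow>
  S_mor a b (length (concat (map occs ts))) (length ts) (den (length (concat (map occs ts))) (linl 0 ts))"
proof (induction ts)
  case Nil
  have e: "den 0 [] = restrict id (cube 0)" using id_den[of 0] by simp
  have "S_mor a b 0 0 (den 0 [])" unfolding e by (rule S_mor.s_id)
  then show ?case by simp
next
  case (Cons t ts)
  let ?l = "length (occs t)" and ?L = "length (concat (map occs ts))"
  have T: "S_mor a b ?l 1 (den ?l [lin 0 t])" using Cons.prems S_lin_term by simp
  have R: "S_mor a b ?L (length ts) (den ?L (linl 0 ts))" using Cons by simp
  have P: "S_mor a b (?l + ?L) (1 + length ts) (prod_map ?l ?L (den ?l [lin 0 t]) (den ?L (linl 0 ts)))"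
    by (rule S_mor.s_prod[OF T R])
  have "prod_map ?l ?L (den ?l [lin 0 t]) (den ?L (linl 0 ts)) = den (?l + ?L) (tensor_tuple ?l [lin 0 t] (linl 0 ts))"
    by (rule tensor_den[symmetric]) (auto simp: occs_lin)
  also have "\<dots> = den (?l + ?L) (lin 0 t # linl ?l ts)"
  proof (rule den_eqI)
    fix x assume x: "x \<in> cube (?l + ?L)"
    then have lx: "length x = ?l + ?L" by (simp add: cube_def)
    have 1: "map (\<lambda>u. ev (shift ?l u) x) (linl 0 ts) = map (\<lambda>u. ev u (drop ?l x)) (linl 0 ts)"
      using lx by (simp add: ev_shift)
    have 2: "map (\<lambda>u. ev u x) (linl ?l ts) = map (\<lambda>u. ev u (drop ?l x)) (linl 0 ts)"
      by (rule linl_shift) (simp add: lx)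
    show "map (\<lambda>t. ev t x) (tensor_tuple ?l [lin 0 t] (linl 0 ts)) = map (\<lambda>t. ev t x) (lin 0 t # linl ?l ts)"
      using 1 2 by (simp add: tensor_tuple_def)
  qed
  finally show ?case using P by simp
qed

lemma C_sub_S:
  assumes a: "a \<in> admissible_rules" and f: "f \<in> C_hom a b m n"
  shows "S_mor a b m n f"
proof -
  obtain ts where ts: "f = den m ts" "length ts = n" "adm_tuple a b m ts"
    using f unfolding C_hom_def by blast
  define vs where "vs = concat (map occs ts)"
  have sig: "\<forall>t\<in>set ts. in_sig b t" using ts(3) unfolding adm_tuple_def by simp
  have s1: "set vs \<subseteq> {..<m}" and s2: "Wk \<notin> a \<longrightarrow> {..<m} \<subseteq> set vs"
    and s3: "Ex \<notin> a \<longrightarrow> sorted vs" and s4: "Ct \<notin> a \<longrightarrow> distinct vs"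
    using ts(3) unfolding adm_tuple_def Let_def vs_def by auto
  have I: "S_mor a b m (length vs) (sel m vs)"
    using IX_struct[OF a s1 s2 s3 s4] unfolding IX_def .
  have L: "S_mor a b (length vs) n (den (length vs) (linl 0 ts))"
    using S_linl[OF sig] ts(2) unfolding vs_def by simp
  have C: "S_mor a b m n (restrict (den (length vs) (linl 0 ts) \<circ> sel m vs) (cube m))"
    by (rule S_mor.s_comp[OF I L])
  have "restrict (den (length vs) (linl 0 ts) \<circ> sel m vs) (cube m) = den m ts"
  proof
    fix x show "restrict (den (length vs) (linl 0 ts) \<circ> sel m vs) (cube m) x = den m ts x"
    proof (cases "x \<in> cube m")
      case True
      have inc: "sel m vs x \<in> cube (length vs)" using sel_in_cube[OF True s1] .
      have sx: "sel m vs x = map (nth x) vs" using True by (simp add: sel_def)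
      have "map (\<lambda>u. ev u (map (nth x) vs)) (linl 0 ts) = map (\<lambda>t. ev t x) ts"
      proof (rule ev_linl_sem)
        have "map (nth (map (nth x) vs)) [0..<length vs] = map (nth x) vs"
          by (intro nth_equalityI) auto
        then show "map (nth (map (nth x) vs)) [0..<0 + length (concat (map occs ts))] = map (nth x) (concat (map occs ts))"
          unfolding vs_def by simp
      qed
      then show ?thesis using True inc sx by (simp add: den_def)
    qed (simp add: den_def)
  qed
  then show ?thesis using C ts(1) by simp
qed

theorem proposition1:
  assumes "a \<in> admissible_rules" and "b \<in> admissible_sigs"
  shows "(\<forall>m n. C_hom a b m n = S_hom a b m n)
       \<and> (\<forall>n. den n (map Var [0..<n]) = restrict id (cube n))
       \<and> (\<forall>m n ts us. length ts = n \<longrightarrow> adm_tuple a b m ts \<longrightarrow> adm_tuple a b n us \<longrightarrow>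
             den m (map (subst ts) us) = restrict (den n us \<circ> den m ts) (cube m))
       \<and> (\<forall>m n p q ts us. length ts = n \<longrightarrow> length us = q \<longrightarrow>
             adm_tuple a b m ts \<longrightarrow> adm_tuple a b p us \<longrightarrow>
             den (m + p) (tensor_tuple m ts us) = prod_map m p (den m ts) (den p us))"
proof (intro conjI allI impI)
  fix m n
  show "C_hom a b m n = S_hom a b m n"
    unfolding S_hom_def using S_sub_C[OF assms(1)] C_sub_S[OF assms(1)] by blast
next
  fix n show "den n (map Var [0..<n]) = restrict id (cube n)" by (rule id_den)
next
  fix m n ts us
  assume "length ts = n" "adm_tuple a b m ts" "adm_tuple a b n us"
  then show "den m (map (subst ts) us) = restrict (den n us \<circ> den m ts) (cube m)"
    using comp_den adm_occs by blast
next
  fix m n p q ts us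
  assume "adm_tuple a b m ts"
  then show "den (m + p) (tensor_tuple m ts us) = prod_map m p (den m ts) (den p us)"
    using tensor_den adm_occs by blast
qed

end
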